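(* Let $G$ be a non-abelian finite $p$-group ($p$ prime) possessing an abelian maximal subgroup $M$. Then $$A_G(t)=\frac{1}{|G|}\left(\frac{|Z(G)|}{1-|G|t}+\frac{|G|-|M|}{1-p|Z(G)|t}+\frac{|M|-|Z(G)|}{1-|M|t}\right).$$
   Context: For a finite group $G$ and $n\ge0$, let $\alpha_{G,n}$ be the number of orbits of $G$ acting on $G^n$ by simultaneous conjugation, and $A_G(t)=\sum_{n\ge0}\alpha_{G,n}t^n$, viewed as a rational function of $t$. *)

theory Defs
  imports "HOL-Algebra.Algebra" "HOL-Computational_Algebra.Formal_Power_Series"
begin

definition group_center :: "('a, 'b) monoid_scheme \<Rightarrow> 'a set" where
  "group_center G = {z \<in> carrier G. \<forall>x \<in> carrier G. z \<otimes>\<^bsub>G\<^esub> x = x \<otimes>\<^bsub>G\<^esub> z}"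

definition maximal_subgroup :: "'a set \<Rightarrow> ('a, 'b) monoid_scheme \<Rightarrow> bool" where
  "maximal_subgroup M G \<longleftrightarrow> subgroup M G \<and> M \<noteq> carrier G \<and>
     (\<forall>H. subgroup H G \<and> M \<subseteq> H \<longrightarrow> H = M \<or> H = carrier G)"

definition tuples :: "('a, 'b) monoid_scheme \<Rightarrow> nat \<Rightarrow> 'a list set" where
  "tuples G n = {xs. length xs = n \<and> set xs \<subseteq> carrier G}"

definition sim_conj_rel :: "('a, 'b) monoid_scheme \<Rightarrow> nat \<Rightarrow> ('a list \<times> 'a list) set" where
  "sim_conj_rel G n = {(xs, ys). xs \<in> tuples G n \<and> ys \<in> tuples G n \<and>
     (\<exists>g \<in> carrier G. ys = map (\<lambda>x. g \<otimes>\<^bsub>G\<^esub> x \<otimes>\<^bsub>G\<^esub> inv\<^bsub>G\<^esub> g) xs)}"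

definition alpha :: "('a, 'b) monoid_scheme \<Rightarrow> nat \<Rightarrow> nat" where
  "alpha G n = card (tuples G n // sim_conj_rel G n)"

definition A_series :: "('a, 'b) monoid_scheme \<Rightarrow> rat fps" where
  "A_series G = Abs_fps (\<lambda>n. of_nat (alpha G n))"

end

theory Submission
  imports Defs "HOL-Computational_Algebra.Primes"
begin

lemma mk_action:
  fixes G (structure)
  assumes G: "group G"
    and cl: "\<And>g x. g \<in> carrier G \<Longrightarrow> x \<in> E \<Longrightarrow> f g x \<in> E"
    and one: "\<And>x. x \<in> E \<Longrightarrow> f \<one>\<^bsub>G\<^esub> x = x"
    and mul: "\<And>g h x. g \<in> carrier G \<Longrightarrow> h \<in> carrier G \<Longrightarrow> x \<in> E \<Longrightarrow> f (g \<otimes>\<^bsub>G\<^esub> h) x = f g (f h x)"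
  shows "group_action G E (\<lambda>g. restrict (f g) E)"
proof -
  interpret group G by fact
  have B: "restrict (f g) E \<in> Bij E" if g: "g \<in> carrier G" for g
  proof -
    have "bij_betw (f g) E E"
    proof (rule bij_betw_byWitness[where f'="f (inv g)"])
      show "\<forall>a\<in>E. f (inv g) (f g a) = a" using g by (metis mul one inv_closed l_inv)
      show "\<forall>a\<in>E. f g (f (inv g) a) = a" using g by (metis mul one inv_closed r_inv)
      show "f g ` E \<subseteq> E" using cl g by auto
      show "f (inv g) ` E \<subseteq> E" using cl g by auto
    qed
    then show ?thesis unfolding Bij_def by simp
  qed
  show ?thesis
    unfolding group_action_def group_hom_def group_hom_axioms_def
  proof (intro conjI)
    show "group G" by fact
    show "group (BijGroup E)" by (rule group_BijGroup)
    show "(\<lambda>g. restrict (f g) E) \<in> hom G (BijGroup E)"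
    proof (rule homI)
      fix g assume "g \<in> carrier G" then show "restrict (f g) E \<in> carrier (BijGroup E)"
        using B by (simp add: BijGroup_def)
    next
      fix g h assume g: "g \<in> carrier G" and h: "h \<in> carrier G"
      show "restrict (f (g \<otimes> h)) E = restrict (f g) E \<otimes>\<^bsub>BijGroup E\<^esub> restrict (f h) E"
      proof -
        have "restrict (f g) E \<otimes>\<^bsub>BijGroup E\<^esub> restrict (f h) E = compose E (restrict (f g) E) (restrict (f h) E)"
          using B[OF g] B[OF h] by (simp add: BijGroup_def)
        also have "\<dots> = restrict (f (g \<otimes> h)) E"
          by (rule ext) (simp add: compose_def cl h mul g)
        finally show ?thesis by simp
      qed
    qed
  qed
qed

lemma pgroup_fix_mod:
  fixes P (structure) and p :: nat
  assumes G: "group P" and fin: "finite (carrier P)" and ord: "card (carrier P) = p ^ k"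
    and p: "Factorial_Ring.prime p" and finE: "finite E"
    and cl: "\<And>g x. g \<in> carrier P \<Longrightarrow> x \<in> E \<Longrightarrow> f g x \<in> E"
    and one: "\<And>x. x \<in> E \<Longrightarrow> f \<one>\<^bsub>P\<^esub> x = x"
    and mul: "\<And>g h x. g \<in> carrier P \<Longrightarrow> h \<in> carrier P \<Longrightarrow> x \<in> E \<Longrightarrow> f (g \<otimes>\<^bsub>P\<^esub> h) x = f g (f h x)"
  shows "card E mod p = card {x\<in>E. \<forall>g\<in>carrier P. f g x = x} mod p"
proof -
  interpret P: group P by fact
  define \<phi> where "\<phi> = (\<lambda>g. restrict (f g) E)"
  interpret A: group_action P E \<phi> unfolding \<phi>_def by (rule mk_action[OF G cl one mul])
  let ?F = "{x\<in>E. \<forall>g\<in>carrier P. f g x = x}"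
  let ?Orb = "orbits P E \<phi>"
  have orb: "orbit P \<phi> x = {f g x | g. g \<in> carrier P}" if "x \<in> E" for x
    using that unfolding orbit_def \<phi>_def by auto
  have finO: "finite ?Orb" using finE unfolding orbits_def by simp
  have cardE: "card E = (\<Sum>Q\<in>?Orb. card Q)"
    using A.disjoint_sum[OF finE, of "\<lambda>_. 1::nat"] by simp
  have pw: "\<exists>i. card Q = p ^ i" if Qin: "Q \<in> ?Orb" for Q
  proof -
    obtain x where x: "x \<in> E" "Q = orbit P \<phi> x" using Qin by (simp add: orbits_def) blast
    have "card Q * card (stabilizer P \<phi> x) = p ^ k"
      using A.orbit_stabilizer_theorem[OF x(1)] x(2) ord by (simp add: order_def)
    then have "card Q dvd p ^ k" by (metis dvd_triv_left)
    then show ?thesis using divides_primepow_nat[OF p] by auto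
  qed
  let ?S1 = "{Q\<in>?Orb. card Q = 1}"
  let ?S2 = "{Q\<in>?Orb. card Q \<noteq> 1}"
  have split: "(\<Sum>Q\<in>?Orb. card Q) = (\<Sum>Q\<in>?S1. card Q) + (\<Sum>Q\<in>?S2. card Q)"
  proof -
    have "?Orb = ?S1 \<union> ?S2" by blast
    then have "(\<Sum>Q\<in>?Orb. card Q) = (\<Sum>Q\<in>?S1 \<union> ?S2. card Q)" by simp
    also have "\<dots> = (\<Sum>Q\<in>?S1. card Q) + (\<Sum>Q\<in>?S2. card Q)"
      by (rule sum.union_disjoint) (use finO in auto)
    finally show ?thesis .
  qed
  have d2: "p dvd (\<Sum>Q\<in>?S2. card Q)"
  proof (rule dvd_sum)
    fix Q assume "Q \<in> ?S2"
    then obtain i where "card Q = p ^ i" "i \<noteq> 0" using pw by fastforce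
    then show "p dvd card Q" by (simp add: dvd_power)
  qed
  have s1: "(\<Sum>Q\<in>?S1. card Q) = card ?S1" by simp
  have S1: "?S1 = (\<lambda>x. {x}) ` ?F"
  proof (intro equalityI subsetI)
    fix Q assume Q: "Q \<in> ?S1"
    then obtain x where x: "x \<in> E" "Q = orbit P \<phi> x" by (simp add: orbits_def) blast
    have "x \<in> Q" using A.orbit_refl x by simp
    from Q have "card Q = 1" by simp
    then obtain y where "Q = {y}" by (rule card_1_singletonE)
    with \<open>x \<in> Q\<close> have Ox: "Q = {x}" by simp
    have "\<forall>g\<in>carrier P. f g x = x" using Ox x orb by auto
    with x Ox show "Q \<in> (\<lambda>x. {x}) ` ?F" by auto
  next
    fix Q assume "Q \<in> (\<lambda>x. {x}) ` ?F"
    then obtain x where x: "x \<in> ?F" "Q = {x}" by auto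
    have xE: "x \<in> E" and xf: "\<forall>g\<in>carrier P. f g x = x" using x by auto
    have "orbit P \<phi> x = {f g x | g. g \<in> carrier P}" using orb xE by blast
    also have "\<dots> = {x}" using xf P.one_closed by force
    finally have "orbit P \<phi> x = {x}" .
    then show "Q \<in> ?S1" using x unfolding orbits_def by auto
  qed
  have "card ?S1 = card ?F" unfolding S1 by (rule card_image) (auto simp: inj_on_def)
  moreover obtain c where "(\<Sum>Q\<in>?S2. card Q) = p * c" using d2 by (auto elim: dvdE)
  ultimately have "card E = card ?F + p * c" using cardE split s1 by simp
  then show ?thesis by simp
qed

definition centr :: "('a, 'b) monoid_scheme \<Rightarrow> 'a \<Rightarrow> 'a set" where
  "centr G g = {x \<in> carrier G. x \<otimes>\<^bsub>G\<^esub> g = g \<otimes>\<^bsub>G\<^esub> x}"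

lemma alpha_burnside:
  fixes G (structure)
  assumes G: "group G" and fin: "finite (carrier G)"
  shows "alpha G n * card (carrier G) = (\<Sum>g\<in>carrier G. card (centr G g) ^ n)"
proof -
  interpret group G by fact
  let ?E = "tuples G n"
  define f where "f = (\<lambda>g xs. map (\<lambda>x. g \<otimes> x \<otimes> inv g) xs)"
  define \<phi> where "\<phi> = (\<lambda>g. restrict (f g) ?E)"
  have cl: "f g xs \<in> ?E" if "g \<in> carrier G" "xs \<in> ?E" for g xs
    using that by (auto simp: f_def tuples_def)
  have one: "f \<one> xs = xs" if "xs \<in> ?E" for xs
    using that by (auto simp: f_def tuples_def intro!: map_idI)
  have mul: "f (g \<otimes> h) xs = f g (f h xs)" if "g \<in> carrier G" "h \<in> carrier G" "xs \<in> ?E" for g h xs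
    using that by (auto simp: f_def tuples_def inv_mult_group m_assoc)
  interpret A: group_action G ?E \<phi> unfolding \<phi>_def by (rule mk_action[OF G cl one mul])
  have finE: "finite ?E"
    using finite_lists_length_eq[OF fin, of n] unfolding tuples_def by (simp add: conj_commute)
  have orbs: "orbits G ?E \<phi> = ?E // sim_conj_rel G n"
  proof -
    have "orbit G \<phi> xs = sim_conj_rel G n `` {xs}" if "xs \<in> ?E" for xs
      using that cl by (auto simp: orbit_def \<phi>_def sim_conj_rel_def f_def)
    then show ?thesis unfolding orbits_def quotient_def by auto
  qed
  have inv: "card (invariants ?E \<phi> g) = card (centr G g) ^ n" if g: "g \<in> carrier G" for g
  proof -
    have "invariants ?E \<phi> g = {xs. set xs \<subseteq> centr G g \<and> length xs = n}"
    proof -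
      have "(g \<otimes> x \<otimes> inv g = x) = (x \<otimes> g = g \<otimes> x)" if "x \<in> carrier G" for x
        using that g by (metis inv_solve_right m_closed)
      then show ?thesis
        unfolding invariants_def \<phi>_def f_def tuples_def centr_def
        by (auto simp: map_eq_conv[where g = "\<lambda>x. x", simplified] subset_iff)
    qed
    moreover have "finite (centr G g)" using fin unfolding centr_def by simp
    ultimately show ?thesis by (simp add: card_lists_length_eq)
  qed
  have "card (orbits G ?E \<phi>) * order G = (\<Sum>g \<in> carrier G. card (invariants ?E \<phi> g))"
    by (rule A.burnside[OF fin finE])
  then show ?thesis using inv unfolding alpha_def orbs order_def by simp
qed

definition csub :: "('a, 'b) monoid_scheme \<Rightarrow> 'a set \<Rightarrow> 'a set" where
  "csub G S = {x \<in> carrier G. \<forall>s\<in>S. x \<otimes>\<^bsub>G\<^esub> s = s \<otimes>\<^bsub>G\<^esub> x}"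

lemma (in group) csub_subgroup:
  assumes "S \<subseteq> carrier G" shows "subgroup (csub G S) G"
proof (rule subgroupI)
  show "csub G S \<subseteq> carrier G" by (auto simp: csub_def)
  show "csub G S \<noteq> {}" using assms by (auto simp: csub_def intro!: exI[of _ \<one>])
next
  fix a assume a: "a \<in> csub G S"
  show "inv a \<in> csub G S" unfolding csub_def
  proof (safe)
    show "inv a \<in> carrier G" using a by (auto simp: csub_def)
    fix s assume s: "s \<in> S"
    then have sc: "s \<in> carrier G" and e: "a \<otimes> s = s \<otimes> a" using a assms by (auto simp: csub_def)
    have ac: "a \<in> carrier G" using a by (auto simp: csub_def)
    have "inv a \<otimes> s = inv a \<otimes> (s \<otimes> a) \<otimes> inv a" using ac sc by (simp add: m_assoc)
    also have "\<dots> = inv a \<otimes> (a \<otimes> s) \<otimes> inv a" using e by simp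
    also have "\<dots> = s \<otimes> inv a" using ac sc by (simp add: m_assoc[symmetric])
    finally show "inv a \<otimes> s = s \<otimes> inv a" .
  qed
next
  fix a b assume a: "a \<in> csub G S" and b: "b \<in> csub G S"
  show "a \<otimes> b \<in> csub G S" unfolding csub_def
  proof (safe)
    show "a \<otimes> b \<in> carrier G" using a b by (auto simp: csub_def)
    fix s assume s: "s \<in> S"
    then have "s \<in> carrier G" "a \<otimes> s = s \<otimes> a" "b \<otimes> s = s \<otimes> b" "a \<in> carrier G" "b \<in> carrier G"
      using a b assms by (auto simp: csub_def)
    then show "a \<otimes> b \<otimes> s = s \<otimes> (a \<otimes> b)" by (metis m_assoc)
  qed
qed

lemma centr_csub: "centr G g = csub G {g}" by (auto simp: centr_def csub_def)
lemma center_csub: "group_center G = csub G (carrier G)" by (auto simp: group_center_def csub_def)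

locale pset = group G for G (structure) +
  fixes p :: nat and M :: "'a set"
  assumes fin: "finite (carrier G)"
    and pp: "Factorial_Ring.prime p"
    and pk: "\<exists>k. card (carrier G) = p ^ k"
    and nc: "\<not> comm_group G"
    and mx: "maximal_subgroup M G"
    and ab: "\<forall>x \<in> M. \<forall>y \<in> M. x \<otimes> y = y \<otimes> x"
begin

lemma Msub: "subgroup M G" using mx by (simp add: maximal_subgroup_def)
lemma Mne: "M \<noteq> carrier G" using mx by (simp add: maximal_subgroup_def)
lemma Mmax: "subgroup H G \<Longrightarrow> M \<subseteq> H \<Longrightarrow> H = M \<or> H = carrier G"
  using mx by (simp add: maximal_subgroup_def)
lemma MG: "M \<subseteq> carrier G" using Msub subgroup.subset by blast
lemma finM: "finite M" using MG fin finite_subset by blast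

lemma centr_sub: "g \<in> carrier G \<Longrightarrow> subgroup (centr G g) G"
  unfolding centr_csub by (rule csub_subgroup) simp

lemma cM: "csub G M = M"
proof -
  have sub: "M \<subseteq> csub G M" using ab MG by (auto simp: csub_def)
  have "csub G M \<noteq> carrier G"
  proof
    assume cG: "csub G M = carrier G"
    have "comm_group G"
    proof (rule group_comm_groupI)
      fix x y assume x: "x \<in> carrier G" and y: "y \<in> carrier G"
      show "x \<otimes> y = y \<otimes> x"
      proof (cases "x \<in> M")
        case True
        have "y \<in> csub G M" using cG y by simp
        then show ?thesis using True by (auto simp: csub_def)
      next
        case False
        have "x \<in> csub G M" using cG x by simp
        then have "M \<subseteq> centr G x" using MG by (auto simp: csub_def centr_def)
        moreover have "x \<in> centr G x" using x by (simp add: centr_def)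
        ultimately have "centr G x = carrier G" using Mmax[OF centr_sub[OF x]] False by auto
        then have "y \<in> centr G x" using y by simp
        then show ?thesis by (auto simp: centr_def)
      qed
    qed
    with nc show False by simp
  qed
  with Mmax[OF csub_subgroup[OF MG] sub] show ?thesis by auto
qed

lemma ZM: "group_center G \<subseteq> M"
proof -
  have "group_center G \<subseteq> csub G M" using MG by (auto simp: group_center_def csub_def)
  then show ?thesis using cM by simp
qed

lemma centr_in: "g \<in> M \<Longrightarrow> g \<notin> group_center G \<Longrightarrow> centr G g = M"
proof -
  assume g: "g \<in> M" "g \<notin> group_center G"
  have gc: "g \<in> carrier G" using g MG by auto
  have "M \<subseteq> centr G g" using g ab MG by (auto simp: centr_def)
  moreover have "centr G g \<noteq> carrier G"
  proof
    assume "centr G g = carrier G"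
    then have "\<forall>x\<in>carrier G. x \<in> centr G g" by simp
    then show False using g gc by (auto simp: centr_def group_center_def)
  qed
  ultimately show ?thesis using Mmax[OF centr_sub[OF gc]] by auto
qed

lemma centr_out_int: "g \<in> carrier G \<Longrightarrow> g \<notin> M \<Longrightarrow> centr G g \<inter> M = group_center G"
proof (intro equalityI subsetI)
  fix m assume g: "g \<in> carrier G" "g \<notin> M" and m: "m \<in> centr G g \<inter> M"
  have mc: "m \<in> carrier G" using m MG by auto
  have "M \<subseteq> centr G m" using m ab MG by (auto simp: centr_def)
  moreover have "g \<in> centr G m" using m g by (auto simp: centr_def)
  ultimately have "centr G m = carrier G" using Mmax[OF centr_sub[OF mc]] g by auto
  then have "\<forall>x\<in>carrier G. x \<in> centr G m" by simp
  then show "m \<in> group_center G" using mc by (auto simp: centr_def group_center_def)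
next
  fix z assume g: "g \<in> carrier G" "g \<notin> M" and z: "z \<in> group_center G"
  then show "z \<in> centr G g \<inter> M" using ZM by (auto simp: centr_def group_center_def)
qed

end

context pset begin

lemma pdvd: "d dvd card (carrier G) \<Longrightarrow> \<exists>i. d = p ^ i"
  using pk divides_primepow_nat[OF pp] by auto

lemma p2: "p \<ge> 2" using pp prime_ge_2_nat by blast

lemma lag: "card (rcosets M) * card M = card (carrier G)"
  using lagrange[OF Msub] by (simp add: order_def)

lemma p_dvd_idx: "p dvd card (rcosets M)"
proof -
  have "card (rcosets M) dvd card (carrier G)" unfolding lag[symmetric] by simp
  then obtain i where i: "card (rcosets M) = p ^ i" using pdvd by blast
  have "i \<noteq> 0"
  proof
    assume "i = 0"
    then have "card M = card (carrier G)" using i lag by simp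
    then have "M = carrier G" using MG fin by (simp add: card_subset_eq)
    with Mne show False by simp
  qed
  then show ?thesis using i by (simp add: dvd_power)
qed

lemma conj_in_M: "x \<in> carrier G \<Longrightarrow> m \<in> M \<Longrightarrow> M #> x #> inv m = M #> x \<Longrightarrow> x \<otimes> inv m \<otimes> inv x \<in> M"
proof -
  assume x: "x \<in> carrier G" and m: "m \<in> M" and e: "M #> x #> inv m = M #> x"
  have mc: "m \<in> carrier G" using m MG by auto
  have "M #> x #> inv m = M #> (x \<otimes> inv m)" using coset_mult_assoc MG x mc by simp
  then have "x \<otimes> inv m \<in> M #> x" using e rcos_self[of "x \<otimes> inv m" M] Msub x mc by simp
  then show ?thesis using subgroup.rcos_module_imp[OF Msub is_group x] by simp
qed

lemma Mnormal: "M \<lhd> G"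
proof -
  let ?P = "G\<lparr>carrier := M\<rparr>"
  let ?E = "rcosets M"
  define f where "f = (\<lambda>m R. R #> inv m)"
  have gP: "group ?P" using subgroup_imp_group[OF Msub] .
  have "card M dvd card (carrier G)" unfolding lag[symmetric] by simp
  then obtain j where j0: "card M = p ^ j" using pdvd by blast
  then have j: "card (carrier ?P) = p ^ j" by simp
  have finE: "finite ?E" using fin unfolding RCOSETS_def by simp
  have cl: "f g R \<in> ?E" if gg: "g \<in> carrier ?P" and RE: "R \<in> ?E" for g R
  proof -
    obtain x where x: "x \<in> carrier G" "R = M #> x" using RE unfolding RCOSETS_def by auto
    have gc: "g \<in> carrier G" using gg MG by auto
    have "f g R = M #> (x \<otimes> inv g)" unfolding f_def x(2) by (rule coset_mult_assoc[OF MG x(1)]) (simp add: gc)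
    then show ?thesis using x gg MG by (auto intro!: rcosetsI)
  qed
  have one: "f \<one>\<^bsub>?P\<^esub> R = R" if RE: "R \<in> ?E" for R
  proof -
    obtain x where x: "x \<in> carrier G" "R = M #> x" using RE unfolding RCOSETS_def by auto
    then have "R \<subseteq> carrier G" using MG by (auto simp: r_coset_def)
    then show ?thesis by (simp add: f_def)
  qed
  have mul: "f (g \<otimes>\<^bsub>?P\<^esub> h) R = f g (f h R)" if gg: "g \<in> carrier ?P" and hh: "h \<in> carrier ?P" and RE: "R \<in> ?E" for g h R
  proof -
    obtain x where x: "x \<in> carrier G" "R = M #> x" using RE unfolding RCOSETS_def by auto
    have gh: "g \<in> carrier G" "h \<in> carrier G" using gg hh MG by auto
    have "f (g \<otimes>\<^bsub>?P\<^esub> h) R = M #> (x \<otimes> (inv h \<otimes> inv g))"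
      unfolding f_def x(2) using gh by (simp add: coset_mult_assoc[OF MG x(1)] inv_mult_group)
    also have "\<dots> = f g (f h R)" unfolding f_def x(2) using gh x(1) MG
      by (simp add: coset_mult_assoc m_assoc)
    finally show ?thesis .
  qed
  let ?F = "{R\<in>?E. \<forall>g\<in>carrier ?P. f g R = R}"
  have "card ?E mod p = card ?F mod p"
    by (rule pgroup_fix_mod[OF gP _ j pp finE cl one mul]) (use fin MG finite_subset in auto)
  then have pF: "p dvd card ?F" using p_dvd_idx by (simp add: mod_eq_0_iff_dvd[symmetric])
  have MF: "M \<in> ?F"
  proof -
    have "M = M #> \<one>" using MG by simp
    moreover have "M #> \<one> \<in> ?E" by (rule rcosetsI[OF MG one_closed])
    ultimately have "M \<in> ?E" by simp
    moreover have "M #> inv g = M" if "g \<in> M" for g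
    proof (rule coset_join2)
      show "inv g \<in> M" using that Msub by (simp add: subgroup.m_inv_closed)
      then show "inv g \<in> carrier G" using MG by auto
    qed (rule Msub)
    ultimately show ?thesis by (simp add: f_def)
  qed
  have finF: "finite ?F" using finE by simp
  have "card ?F \<noteq> 0" using MF finF by auto
  then have "p \<le> card ?F" using pF by (simp add: dvd_imp_le)
  then have "card ?F \<ge> 2" using p2 by simp
  then obtain R where R: "R \<in> ?F" "R \<noteq> M"
  proof -
    assume h: "\<And>R. R \<in> ?F \<Longrightarrow> R \<noteq> M \<Longrightarrow> thesis"
    show thesis
    proof (rule ccontr)
      assume "\<not> thesis"
      then have "?F \<subseteq> {M}" using h by blast
      then have "card ?F \<le> card {M}" by (rule card_mono[rotated]) simp
      then have "card ?F \<le> 1" by simp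
      with \<open>card ?F \<ge> 2\<close> show False by simp
    qed
  qed
  have RE: "R \<in> rcosets M" using R(1) by blast
  obtain x where x: "x \<in> carrier G" "R = M #> x" using RE unfolding RCOSETS_def by blast
  have xM: "x \<notin> M"
  proof
    assume "x \<in> M"
    then have "M #> x = M" using coset_join2[OF x(1) Msub] by blast
    with x R(2) show False by blast
  qed
  have c1: "x \<otimes> m \<otimes> inv x \<in> M" if m: "m \<in> M" for m
  proof -
    have im: "inv m \<in> M" by (rule subgroup.m_inv_closed[OF Msub m])
    have RF0: "\<forall>g\<in>carrier ?P. f g R = R" using R(1) by simp
    then have RF: "\<forall>g\<in>M. f g R = R" by simp
    then have "f (inv m) R = R" using im by (rule bspec)
    then have "M #> x #> inv (inv m) = M #> x" unfolding f_def x(2) .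
    then have "x \<otimes> inv (inv m) \<otimes> inv x \<in> M" using conj_in_M[OF x(1) im] by simp
    moreover have "inv (inv m) = m" using m MG by (simp add: subsetD)
    ultimately show ?thesis by simp
  qed
  define c where "c = (\<lambda>m. x \<otimes> m \<otimes> inv x)"
  have cM: "c ` M = M"
  proof (rule endo_inj_surj[OF finM])
    show "c ` M \<subseteq> M" using c1 by (auto simp: c_def)
    show "inj_on c M"
    proof (rule inj_onI)
      fix a b assume "a \<in> M" "b \<in> M" "c a = c b"
      then show "a = b" using conjugation_is_inj[OF x(1)] MG by (auto simp: c_def)
    qed
  qed
  have c2: "inv x \<otimes> m \<otimes> x \<in> M" if m: "m \<in> M" for m
  proof -
    obtain m' where m': "m' \<in> M" "m = c m'" using cM m by blast
    have m'c: "m' \<in> carrier G" using m'(1) MG by auto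
    have "inv x \<otimes> m \<otimes> x = m'" unfolding m'(2) c_def using x(1) m'c by (simp add: m_assoc) (simp add: m_assoc[symmetric])
    then show ?thesis using m' by simp
  qed
  define N where "N = {y \<in> carrier G. \<forall>m\<in>M. y \<otimes> m \<otimes> inv y \<in> M \<and> inv y \<otimes> m \<otimes> y \<in> M}"
  have Nsub: "subgroup N G"
  proof (rule subgroupI)
    show "N \<subseteq> carrier G" by (auto simp: N_def)
    show "N \<noteq> {}" using MG by (auto simp: N_def intro!: exI[of _ \<one>])
  next
    fix a assume a: "a \<in> N"
    then show "inv a \<in> N" using MG by (auto simp: N_def)
  next
    fix a b assume a: "a \<in> N" and b: "b \<in> N"
    have ac: "a \<in> carrier G" and bc: "b \<in> carrier G" using a b by (auto simp: N_def)
    show "a \<otimes> b \<in> N" unfolding N_def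
    proof (safe)
      show "a \<otimes> b \<in> carrier G" using ac bc by simp
      fix m assume m: "m \<in> M"
      have mc: "m \<in> carrier G" using m MG by auto
      have "b \<otimes> m \<otimes> inv b \<in> M" using b m by (auto simp: N_def)
      then have "a \<otimes> (b \<otimes> m \<otimes> inv b) \<otimes> inv a \<in> M" using a by (auto simp: N_def)
      then show "a \<otimes> b \<otimes> m \<otimes> inv (a \<otimes> b) \<in> M" using ac bc mc by (simp add: inv_mult_group m_assoc)
      have "inv a \<otimes> m \<otimes> a \<in> M" using a m by (auto simp: N_def)
      then have "inv b \<otimes> (inv a \<otimes> m \<otimes> a) \<otimes> b \<in> M" using b by (auto simp: N_def)
      then show "inv (a \<otimes> b) \<otimes> m \<otimes> (a \<otimes> b) \<in> M" using ac bc mc by (simp add: inv_mult_group m_assoc)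
    qed
  qed
  have MN: "M \<subseteq> N" using Msub MG by (auto simp: N_def subgroup.m_closed subgroup.m_inv_closed)
  have "x \<in> N" using x c1 c2 by (auto simp: N_def)
  then have "N = carrier G" using Mmax[OF Nsub MN] xM by auto
  then show ?thesis unfolding normal_inv_iff using Msub by (auto simp: N_def)
qed

end

context pset begin

lemma idx: "card (carrier G) = p * card M"
proof -
  interpret N: normal M G by (rule Mnormal)
  let ?Q = "G Mod M"
  have gQ: "group ?Q" by (rule N.factorgroup_is_group)
  have cQ: "carrier ?Q = rcosets M" by (simp add: FactGroup_def)
  have oQ: "\<one>\<^bsub>?Q\<^esub> = M" by (simp add: FactGroup_def)
  have hom: "group_hom G ?Q (\<lambda>a. M #> a)"
    using N.r_coset_hom_Mod gQ by (simp add: group_hom_def group_hom_axioms_def is_group)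
  have triv: "K = {M} \<or> K = carrier ?Q" if K: "subgroup K ?Q" for K
  proof -
    define H where "H = {a \<in> carrier G. M #> a \<in> K}"
    have MK: "M \<in> K" using subgroup.one_closed[OF K] oQ by simp
    have Hsub: "subgroup H G"
    proof (rule subgroupI)
      show "H \<subseteq> carrier G" by (auto simp: H_def)
      have "M #> \<one> \<in> K" using MK MG by simp
      then show "H \<noteq> {}" by (auto simp: H_def)
    next
      fix a assume a: "a \<in> H"
      then have ac: "a \<in> carrier G" and aK: "M #> a \<in> K" by (auto simp: H_def)
      have "M #> inv a = inv\<^bsub>?Q\<^esub> (M #> a)" using group_hom.hom_inv[OF hom ac] .
      also have "\<dots> \<in> K" using subgroup.m_inv_closed[OF K aK] .
      finally show "inv a \<in> H" using ac by (simp add: H_def)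
    next
      fix a b assume a: "a \<in> H" and b: "b \<in> H"
      then have ac: "a \<in> carrier G" and aK: "M #> a \<in> K" and bc: "b \<in> carrier G" and bK: "M #> b \<in> K"
        by (auto simp: H_def)
      have "M #> (a \<otimes> b) = (M #> a) \<otimes>\<^bsub>?Q\<^esub> (M #> b)" using group_hom.hom_mult[OF hom ac bc] .
      also have "\<dots> \<in> K" using subgroup.m_closed[OF K aK bK] .
      finally show "a \<otimes> b \<in> H" using ac bc by (simp add: H_def)
    qed
    have MH: "M \<subseteq> H"
    proof
      fix a assume a: "a \<in> M"
      then have ac: "a \<in> carrier G" using MG by auto
      have "M #> a = M" by (rule coset_join2[OF ac Msub a])
      then show "a \<in> H" using ac MK by (simp add: H_def)
    qed
    have KQ: "K \<subseteq> carrier ?Q" using subgroup.subset[OF K] .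
    show ?thesis
    proof (cases "H = M")
      case True
      have "K \<subseteq> {M}"
      proof
        fix R assume R: "R \<in> K"
        then have "R \<in> rcosets M" using KQ cQ by auto
        then obtain a where a: "a \<in> carrier G" "R = M #> a" unfolding RCOSETS_def by blast
        then have "a \<in> H" using R by (simp add: H_def)
        then have "a \<in> M" using True by simp
        then show "R \<in> {M}" using a coset_join2[OF a(1) Msub] by simp
      qed
      then show ?thesis using MK by blast
    next
      case False
      then have HG: "H = carrier G" using Mmax[OF Hsub MH] by blast
      have "carrier ?Q \<subseteq> K"
      proof
        fix R assume "R \<in> carrier ?Q"
        then have "R \<in> rcosets M" using cQ by simp
        then obtain a where a: "a \<in> carrier G" "R = M #> a" unfolding RCOSETS_def by blast
        then have "a \<in> H" using HG by simp
        then show "R \<in> K" using a by (simp add: H_def)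
      qed
      then show ?thesis using KQ by blast
    qed
  qed
  have finQ: "finite (carrier ?Q)" using fin cQ unfolding RCOSETS_def by simp
  have "p dvd card (carrier ?Q)" using p_dvd_idx cQ by simp
  moreover have "M \<in> carrier ?Q" using monoid.one_closed[OF group.is_monoid[OF gQ]] oQ by simp
  then have "card (carrier ?Q) \<noteq> 0" using finQ by auto
  ultimately have "p \<le> card (carrier ?Q)" by (simp add: dvd_imp_le)
  then have "card (carrier ?Q) \<ge> 2" using p2 by simp
  then obtain Xq where Xq: "Xq \<in> carrier ?Q" "Xq \<noteq> M"
  proof -
    assume h: "\<And>Xq. Xq \<in> carrier ?Q \<Longrightarrow> Xq \<noteq> M \<Longrightarrow> thesis"
    show thesis
    proof (rule ccontr)
      assume "\<not> thesis"
      then have "carrier ?Q \<subseteq> {M}" using h by blast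
      then have "card (carrier ?Q) \<le> card {M}" by (rule card_mono[rotated]) simp
      with \<open>card (carrier ?Q) \<ge> 2\<close> show False by simp
    qed
  qed
  have "group.ord ?Q Xq dvd order ?Q" by (rule group.ord_dvd_group_order[OF gQ Xq(1)])
  moreover have "order ?Q dvd card (carrier G)" unfolding order_def cQ lag[symmetric] by simp
  ultimately have "group.ord ?Q Xq dvd card (carrier G)" by (rule dvd_trans)
  then obtain b where b: "group.ord ?Q Xq = p ^ b" using pdvd by blast
  have "b \<noteq> 0"
  proof
    assume "b = 0"
    then have "group.ord ?Q Xq = 1" using b by simp
    then have "Xq = \<one>\<^bsub>?Q\<^esub>" using group.ord_eq_1[OF gQ Xq(1)] by simp
    with Xq(2) oQ show False by simp
  qed
  define Yq where "Yq = Xq [^]\<^bsub>?Q\<^esub> (p ^ (b - 1))"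
  have YQ: "Yq \<in> carrier ?Q" unfolding Yq_def by (rule monoid.nat_pow_closed[OF group.is_monoid[OF gQ] Xq(1)])
  have "group.ord ?Q Yq = group.ord ?Q Xq div p ^ (b - 1)" unfolding Yq_def
  proof (rule group.ord_pow[OF gQ Xq(1)])
    show "p ^ (b - 1) dvd group.ord ?Q Xq" using b \<open>b \<noteq> 0\<close> by (simp add: le_imp_power_dvd)
    show "p ^ (b - 1) \<noteq> 0" using p2 by simp
  qed
  also have "\<dots> = p"
  proof -
    obtain c where c: "b = Suc c" using \<open>b \<noteq> 0\<close> not0_implies_Suc by blast
    show ?thesis unfolding b c using p2 by simp
  qed
  finally have oY: "group.ord ?Q Yq = p" .
  let ?K = "generate ?Q {Yq}"
  have Ksub: "subgroup ?K ?Q" using group.generate_is_subgroup[OF gQ] YQ by simp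
  have cK: "card ?K = p" using group.generate_pow_card[OF gQ YQ] oY by simp
  have "?K \<noteq> {M}" using cK p2 by auto
  then have "?K = carrier ?Q" using triv[OF Ksub] by blast
  then have "card (carrier ?Q) = p" using cK by simp
  then show ?thesis using lag cQ by simp
qed

end

context pset begin

lemma centr_out: assumes g: "g \<in> carrier G" "g \<notin> M"
  shows "card (centr G g) = p * card (group_center G)"
proof -
  let ?C = "centr G g"
  let ?Z = "group_center G"
  have Csub: "subgroup ?C G" by (rule centr_sub[OF g(1)])
  have CG: "?C \<subseteq> carrier G" by (auto simp: centr_def)
  have finC: "finite ?C" using fin CG finite_subset by blast
  have CM: "?C \<inter> M = ?Z" by (rule centr_out_int[OF g])
  have ZC: "?Z \<subseteq> ?C" using CM by blast
  define I where "I = (\<lambda>c. M #> c) ` ?C"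
  define A where "A = (\<lambda>R. {c \<in> ?C. M #> c = R})"
  have finI: "finite I" using finC by (simp add: I_def)
  have Cun: "?C = \<Union> (A ` I)" by (auto simp: A_def I_def)
  have fib: "card (A R) = card ?Z" if R: "R \<in> I" for R
  proof -
    obtain c0 where c0: "c0 \<in> ?C" "R = M #> c0" using R by (auto simp: I_def)
    have c0c: "c0 \<in> carrier G" using c0 CG by auto
    have "A R = (\<lambda>z. z \<otimes> c0) ` ?Z"
    proof (intro equalityI subsetI)
      fix c assume "c \<in> A R"
      then have c: "c \<in> ?C" "M #> c = M #> c0" using c0 by (auto simp: A_def)
      have cc: "c \<in> carrier G" using c CG by auto
      have "c \<in> M #> c0" using repr_independenceD[OF Msub cc] c(2) by simp
      then have "c \<otimes> inv c0 \<in> M" using subgroup.rcos_module_imp[OF Msub is_group c0c] by simp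
      moreover have "c \<otimes> inv c0 \<in> ?C"
        using Csub c(1) c0(1) by (simp add: subgroup.m_closed subgroup.m_inv_closed)
      ultimately have zz: "c \<otimes> inv c0 \<in> ?Z" using CM by blast
      have "c = (c \<otimes> inv c0) \<otimes> c0" using cc c0c by (simp add: m_assoc)
      then show "c \<in> (\<lambda>z. z \<otimes> c0) ` ?Z" using zz by blast
    next
      fix c assume "c \<in> (\<lambda>z. z \<otimes> c0) ` ?Z"
      then obtain z where z: "z \<in> ?Z" "c = z \<otimes> c0" by blast
      have zM: "z \<in> M" using z ZM by auto
      have "c \<in> ?C" using z ZC c0 Csub by (simp add: subset_iff subgroup.m_closed)
      moreover have "c \<in> M #> c0" using z zM by (auto simp: r_coset_def)
      then have "M #> c0 = M #> c" using repr_independence[OF _ c0c Msub] by simp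
      ultimately show "c \<in> A R" using c0 by (simp add: A_def)
    qed
    moreover have "inj_on (\<lambda>z. z \<otimes> c0) ?Z"
      by (rule inj_onI) (use c0c in \<open>auto simp: group_center_def\<close>)
    ultimately show ?thesis by (simp add: card_image)
  qed
  have "card ?C = (\<Sum>R\<in>I. card (A R))"
    unfolding Cun by (rule card_UN_disjoint) (use finI finC in \<open>auto simp: A_def\<close>)
  also have "\<dots> = card I * card ?Z" using fib by simp
  finally have cC: "card ?C = card I * card ?Z" .
  have cR: "card (rcosets M) = p"
  proof -
    have "\<one> \<in> M" by (rule subgroup.one_closed[OF Msub])
    then have "card M \<noteq> 0" using finM by auto
    then show ?thesis using lag idx by simp
  qed
  have "I \<subseteq> rcosets M" using CG MG by (auto simp: I_def intro: rcosetsI)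
  then have Ile: "card I \<le> p" using cR finI by (metis card_mono RCOSETS_def fin finite_UN_I finite.intros)
  have "M \<in> I"
  proof -
    have "\<one> \<in> ?C" using Csub subgroup.one_closed by blast
    then have "M #> \<one> \<in> I" unfolding I_def by (rule imageI)
    then show ?thesis using MG by simp
  qed
  moreover have "M #> g \<in> I" using g by (auto simp: I_def centr_def)
  moreover have "M #> g \<noteq> M" using coset_join1[OF _ g(1) Msub] g(2) by blast
  ultimately have "{M, M #> g} \<subseteq> I" by simp
  then have "card {M, M #> g} \<le> card I" using finI by (rule card_mono[rotated])
  then have I2: "card I \<ge> 2" using \<open>M #> g \<noteq> M\<close> by simp
  have "card ?C dvd card (carrier G)" using lagrange[OF Csub] by (metis order_def dvd_triv_right)
  then have "card I dvd card (carrier G)" using cC by (metis dvd_mult_left)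
  then obtain i where i: "card I = p ^ i" using pdvd by blast
  with I2 have "i \<noteq> 0" by (metis power_0 one_less_numeral_iff semiring_norm(76) not_le order_refl le_antisym Suc_1 not_less_eq_eq)
  then have "p dvd card I" using i by (simp add: dvd_power)
  then have "p \<le> card I" using I2 by (simp add: dvd_imp_le)
  then have "card I = p" using Ile by simp
  then show ?thesis using cC by simp
qed

end

lemma geom_inv: "inverse (1 - fps_const (c::rat) * fps_X) = Abs_fps (\<lambda>n. c ^ n)"
proof (rule fps_inverse_unique)
  show "(1 - fps_const c * fps_X) * Abs_fps (\<lambda>n. c ^ n) = 1"
  proof (rule fps_ext)
    fix n
    have e: "(1 - fps_const c * fps_X) * Abs_fps (\<lambda>n. c ^ n)
        = Abs_fps (\<lambda>n. c ^ n) - fps_const c * (fps_X * Abs_fps (\<lambda>n. c ^ n))"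
      by (simp add: algebra_simps)
    show "fps_nth ((1 - fps_const c * fps_X) * Abs_fps (\<lambda>n. c ^ n)) n = fps_nth (1::rat fps) n"
      unfolding e by (cases n) (simp_all del: fps_mult_left_const_nth add: fps_mult_left_const_nth)
  qed
qed

context pset begin

lemma count: "alpha G n * card (carrier G) =
   card (group_center G) * card (carrier G) ^ n + (card M - card (group_center G)) * card M ^ n
   + (card (carrier G) - card M) * (p * card (group_center G)) ^ n"
proof -
  let ?Z = "group_center G"
  have ZG: "?Z \<subseteq> carrier G" using ZM MG by auto
  have finZ: "finite ?Z" using ZG fin finite_subset by blast
  have dec: "carrier G = ?Z \<union> (M - ?Z) \<union> (carrier G - M)" using ZM MG by auto
  have "(\<Sum>g\<in>carrier G. card (centr G g) ^ n)
      = (\<Sum>g\<in>?Z. card (centr G g) ^ n) + (\<Sum>g\<in>M - ?Z. card (centr G g) ^ n)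
        + (\<Sum>g\<in>carrier G - M. card (centr G g) ^ n)"
    apply (subst dec)
    apply (subst sum.union_disjoint)
       apply (use fin finM finZ ZM in auto)[3]
    apply (subst sum.union_disjoint)
       apply (use fin finM finZ ZM in auto)
    done
  also have "(\<Sum>g\<in>?Z. card (centr G g) ^ n) = card ?Z * card (carrier G) ^ n"
  proof -
    have "centr G g = carrier G" if "g \<in> ?Z" for g using that by (auto simp: centr_def group_center_def)
    then show ?thesis by simp
  qed
  also have "(\<Sum>g\<in>M - ?Z. card (centr G g) ^ n) = (card M - card ?Z) * card M ^ n"
    using centr_in by (simp add: card_Diff_subset finZ ZM)
  also have "(\<Sum>g\<in>carrier G - M. card (centr G g) ^ n) = (card (carrier G) - card M) * (p * card ?Z) ^ n"
    using centr_out by (simp add: card_Diff_subset finM MG)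
  finally show ?thesis using alpha_burnside[OF is_group fin] by simp
qed

end

theorem theorem7p4:
  fixes G :: "('a, 'b) monoid_scheme" and p :: nat and M :: "'a set"
  assumes "group G"
    and "finite (carrier G)"
    and "Factorial_Ring.prime p"
    and "\<exists>k. card (carrier G) = p ^ k"
    and "\<not> comm_group G"
    and "maximal_subgroup M G"
    and "\<forall>x \<in> M. \<forall>y \<in> M. x \<otimes>\<^bsub>G\<^esub> y = y \<otimes>\<^bsub>G\<^esub> x"
  shows "A_series G =
    fps_const (1 / of_nat (card (carrier G))) *
      (fps_const (of_nat (card (group_center G))) *
          inverse (1 - fps_const (of_nat (card (carrier G))) * fps_X)
       + fps_const (of_nat (card (carrier G)) - of_nat (card M)) *
          inverse (1 - fps_const (of_nat p * of_nat (card (group_center G))) * fps_X)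
       + fps_const (of_nat (card M) - of_nat (card (group_center G))) *
          inverse (1 - fps_const (of_nat (card M)) * fps_X))"
proof -
  interpret pset G p M by (rule pset.intro[OF assms(1)], unfold_locales) (use assms in auto)
  let ?g = "card (carrier G)" and ?m = "card M" and ?z = "card (group_center G)"
  have ZG: "group_center G \<subseteq> M" by (rule ZM)
  have zm: "?z \<le> ?m" using ZG finM by (simp add: card_mono)
  have mg: "?m \<le> ?g" using MG fin by (simp add: card_mono)
  have g0: "?g \<noteq> 0" using fin one_closed by auto
  show ?thesis
    unfolding geom_inv
  proof (rule fps_ext)
    fix n
    have c: "of_nat (alpha G n) * (of_nat ?g :: rat) =
       of_nat ?z * of_nat ?g ^ n + (of_nat ?m - of_nat ?z) * of_nat ?m ^ n
       + (of_nat ?g - of_nat ?m) * (of_nat p * of_nat ?z) ^ n"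
      using arg_cong[OF count[of n], of "of_nat :: nat \<Rightarrow> rat"] zm mg by (simp add: of_nat_diff)
    have a: "of_nat (alpha G n) = 1 / (of_nat ?g :: rat) * (of_nat ?z * of_nat ?g ^ n
       + (of_nat ?g - of_nat ?m) * (of_nat p * of_nat ?z) ^ n + (of_nat ?m - of_nat ?z) * of_nat ?m ^ n)"
      using c g0 by (simp add: field_simps)
    show "fps_nth (A_series G) n = fps_nth (fps_const (1 / of_nat ?g) *
      (fps_const (of_nat ?z) * Abs_fps (\<lambda>n. of_nat ?g ^ n) +
       fps_const (of_nat ?g - of_nat ?m) * Abs_fps (\<lambda>n. (of_nat p * of_nat ?z) ^ n) +
       fps_const (of_nat ?m - of_nat ?z) * Abs_fps (\<lambda>n. of_nat ?m ^ n))) n"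
      unfolding A_series_def fps_mult_left_const_nth fps_add_nth fps_nth_Abs_fps a ..
  qed
qed

end
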